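(* For $i\in\{1,\dots,m\}$ let $q_i(y)=y^\top A_iy+2b_i^\top y+c_i$ with $A_i\in\mathbb{S}^{n-1}$, $b_i\in\mathbb{R}^{n-1}$, $c_i\in\mathbb{R}$, let $M_i=\begin{pmatrix}c_i & b_i^\top\\ b_i & A_i\end{pmatrix}\in\mathbb{S}^n$, $\mathcal{M}=\{M_1,\dots,M_m\}$, and $\mathcal{Y}=\{y\in\mathbb{R}^{n-1}: q_i(y)\ge 0\ \forall i\in\{1,\dots,m\}\}$. Suppose there exists $\lambda^*\in\mathbb{R}^m_+$ such that $\sum_{i=1}^m\lambda^*_iA_i$ is negative definite. If $\mathcal{S}(\mathcal{M})$ is rank-one generated, then $$\mathrm{conv}(\mathcal{Y})=\left\{y\in\mathbb{R}^{n-1}:\ \exists\, Y\in\mathbb{S}^{n-1},\ Y\succeq yy^\top,\ \langle A_i,Y\rangle+2\langle b_i,y\rangle+c_i\ge 0\ \forall i\in\{1,\dots,m\}\right\};$$ in particular $\mathrm{conv}(\mathcal{Y})$ is semidefinite-representable.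
   Context: $\mathbb{S}^n$ denotes real symmetric $n\times n$ matrices with $\langle A,B\rangle=\mathrm{tr}(AB)$, $\mathbb{S}^n_+$ the PSD cone, and $Y\succeq Z$ means $Y-Z$ is PSD. For $\mathcal{M}\subseteq\mathbb{S}^n$, $\mathcal{S}(\mathcal{M})=\{X\in\mathbb{S}^n_+:\langle M,X\rangle\ge0\ \forall M\in\mathcal{M}\}$. A closed convex cone $\mathcal{S}\subseteq\mathbb{S}^n_+$ is rank-one generated (ROG) if $\mathcal{S}=\mathrm{conv}(\mathcal{S}\cap\{xx^\top:x\in\mathbb{R}^n\})$. *)

theory Defs
  imports "HOL-Analysis.Analysis"
begin

definition sym_mat :: "real^'k^'k \<Rightarrow> bool" where
  "sym_mat A \<longleftrightarrow> transpose A = A"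

definition psd :: "real^'k^'k \<Rightarrow> bool" where
  "psd A \<longleftrightarrow> sym_mat A \<and> (\<forall>x. 0 \<le> x \<bullet> (A *v x))"

definition neg_def :: "real^'k^'k \<Rightarrow> bool" where
  "neg_def A \<longleftrightarrow> sym_mat A \<and> (\<forall>x. x \<noteq> 0 \<longrightarrow> x \<bullet> (A *v x) < 0)"

definition frob :: "real^'k^'k \<Rightarrow> real^'k^'k \<Rightarrow> real" where
  "frob A B = trace (A ** B)"

definition outer :: "real^'k \<Rightarrow> real^'k \<Rightarrow> real^'k^'k" where
  "outer x y = (\<chi> i j. x $ i * y $ j)"

definition S_cone :: "(real^'k^'k) set \<Rightarrow> (real^'k^'k) set" where
  "S_cone \<M> = {X. psd X \<and> (\<forall>M\<in>\<M>. 0 \<le> frob M X)}"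

definition ROG :: "(real^'k^'k) set \<Rightarrow> bool" where
  "ROG S \<longleftrightarrow> S = convex hull (S \<inter> range (\<lambda>x. outer x x))"

text \<open>The lifted matrix [[c, b^T],[b, A]] in S^n; index Inl () plays the role of
  the first (0-th) coordinate, Inr i the remaining n-1 coordinates.\<close>
definition lift_mat :: "real^'k^'k \<Rightarrow> real^'k \<Rightarrow> real \<Rightarrow> real^(unit + 'k)^(unit + 'k)" where
  "lift_mat A b c = (\<chi> i j. (case i of
       Inl _ \<Rightarrow> (case j of Inl _ \<Rightarrow> c | Inr j' \<Rightarrow> b $ j')
     | Inr i' \<Rightarrow> (case j of Inl _ \<Rightarrow> b $ i' | Inr j' \<Rightarrow> A $ i' $ j')))"

definition quad :: "real^'k^'k \<Rightarrow> real^'k \<Rightarrow> real \<Rightarrow> real^'k \<Rightarrow> real" where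
  "quad A b c y = y \<bullet> (A *v y) + 2 * (b \<bullet> y) + c"

end

theory Submission
  imports Defs
begin

lemma sum_UNIV_plus: "(\<Sum>i\<in>(UNIV::(unit+'b::finite) set). f i) = f (Inl ()) + (\<Sum>j\<in>UNIV. f (Inr j))"
proof -
  have "(\<Sum>i\<in>(UNIV::(unit+'b) set). f i) = (\<Sum>i\<in>(UNIV<+>UNIV). f i)" by simp
  also have "\<dots> = (\<Sum>i\<in>UNIV. f (Inl i)) + (\<Sum>j\<in>UNIV. f (Inr j))"
    by (subst sum.Plus) auto
  finally show ?thesis by (simp add: UNIV_unit)
qed

lemma frob_alt: "frob M N = (\<Sum>i\<in>UNIV. \<Sum>j\<in>UNIV. M$i$j * N$j$i)"
  by (simp add: frob_def trace_def matrix_matrix_mult_def)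

lemma qf_alt: "x \<bullet> (M *v x) = (\<Sum>i\<in>UNIV. \<Sum>j\<in>UNIV. x$i * M$i$j * x$j)"
  by (simp add: inner_vec_def matrix_vector_mult_def sum_distrib_left mult.assoc)

lemma frob_outer: "frob M (outer x x) = x \<bullet> (M *v x)"
  unfolding frob_alt qf_alt outer_def
  by (simp add: mult_ac)

lemma qf_lift: "x \<bullet> (lift_mat A b c *v x) =
   c * (x$Inl ())^2 + 2 * (x$Inl ()) * (b \<bullet> (\<chi> j. x$Inr j)) + (\<chi> j. x$Inr j) \<bullet> (A *v (\<chi> j. x$Inr j))"
  unfolding qf_alt
  by (simp add: sum_UNIV_plus lift_mat_def inner_vec_def sum.distrib sum_distrib_left power2_eq_square algebra_simps)

lemma frob_lift: "frob (lift_mat A b c) (lift_mat Y y 1) = c + 2 * (b \<bullet> y) + frob A Y"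
  unfolding frob_alt
  by (simp add: sum_UNIV_plus lift_mat_def inner_vec_def sum.distrib algebra_simps)

lemma outer_mv: "outer y y *v x = (y \<bullet> x) *\<^sub>R y"
  by (simp add: vec_eq_iff outer_def matrix_vector_mult_def inner_vec_def sum_distrib_left mult_ac)

lemma qf_add: "x \<bullet> ((P + Q) *v x) = x \<bullet> (P *v x) + x \<bullet> (Q *v x)"
  unfolding qf_alt by (simp add: sum.distrib algebra_simps)
lemma qf_diff: "x \<bullet> ((P - Q) *v x) = x \<bullet> (P *v x) - x \<bullet> (Q *v x)"
  using qf_add[of x "P - Q" Q] by simp
lemma qf_scale: fixes x :: "real^'k" shows "x \<bullet> ((a *\<^sub>R P) *v x) = a * (x \<bullet> (P *v x))"
  by (simp add: qf_alt[of x] sum_distrib_left algebra_simps)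
lemma frob_add: "frob M (P + Q) = frob M P + frob M Q"
  unfolding frob_alt by (simp add: sum.distrib algebra_simps)
lemma frob_scale: "frob M (a *\<^sub>R P) = a * frob M P"
  unfolding frob_alt by (simp add: sum_distrib_left algebra_simps)

lemma sym_add: "sym_mat P \<Longrightarrow> sym_mat Q \<Longrightarrow> sym_mat (P + Q)"
  by (simp add: sym_mat_def vec_eq_iff transpose_def)
lemma sym_scale: "sym_mat P \<Longrightarrow> sym_mat (a *\<^sub>R P)"
  by (simp add: sym_mat_def vec_eq_iff transpose_def)
lemma sym_lift: "sym_mat Y \<Longrightarrow> sym_mat (lift_mat Y y 1)"
  unfolding sym_mat_def transpose_def lift_mat_def vec_eq_iff
  by (auto split: sum.splits)

lemma sym_diff: "sym_mat P \<Longrightarrow> sym_mat Q \<Longrightarrow> sym_mat (P - Q)"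
  by (simp add: sym_mat_def vec_eq_iff transpose_def)
lemma sym_outer: "sym_mat (outer y y)"
  by (simp add: sym_mat_def vec_eq_iff transpose_def outer_def mult.commute)

lemma qf_outer: "x \<bullet> (outer y y *v x) = (y \<bullet> x)^2"
  by (simp add: outer_mv power2_eq_square inner_commute)

lemma psd_outer_iff: "psd (Y - outer y y) \<longleftrightarrow> sym_mat (Y - outer y y) \<and> (\<forall>x. (y \<bullet> x)^2 \<le> x \<bullet> (Y *v x))"
  by (simp add: psd_def qf_diff qf_outer)

lemma convex_ineq:
  fixes u v p1 p2 q1 q2 :: real
  assumes "0 \<le> u" "0 \<le> v" "u + v = 1" "p1^2 \<le> q1" "p2^2 \<le> q2"
  shows "(u * p1 + v * p2)^2 \<le> u * q1 + v * q2"
proof -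
  have "u * p1^2 + v * p2^2 - (u * p1 + v * p2)^2 = u * v * (p1-p2)^2"
  proof -
    have v: "v = 1 - u" using assms(3) by simp
    show ?thesis unfolding v by (simp add: power2_eq_square algebra_simps)
  qed
  moreover have "u * v * (p1-p2)^2 \<ge> 0" using assms by simp
  moreover have "u * p1^2 \<le> u * q1" "v * p2^2 \<le> v * q2" using assms by (simp_all add: mult_left_mono)
  ultimately show ?thesis by linarith
qed

theorem proposition5p9:
  fixes m :: nat
    and A :: "nat \<Rightarrow> real^'n^'n"
    and b :: "nat \<Rightarrow> real^'n"
    and c :: "nat \<Rightarrow> real"
  assumes symA: "\<forall>i<m. sym_mat (A i)"
    and slater: "\<exists>lam :: nat \<Rightarrow> real. (\<forall>i<m. 0 \<le> lam i) \<and>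
                   neg_def (\<Sum>i<m. lam i *\<^sub>R A i)"
    and rog: "ROG (S_cone ((\<lambda>i. lift_mat (A i) (b i) (c i)) ` {..<m}))"
  shows "convex hull {y. \<forall>i<m. 0 \<le> quad (A i) (b i) (c i) y} =
         {y. \<exists>Y. sym_mat Y \<and> psd (Y - outer y y) \<and>
              (\<forall>i<m. 0 \<le> frob (A i) Y + 2 * (b i \<bullet> y) + c i)}"
  (is "convex hull ?Q = ?R")
proof
  show "convex hull ?Q \<subseteq> ?R"
  proof (rule hull_minimal)
    show "?Q \<subseteq> ?R"
    proof
      fix y assume "y \<in> ?Q"
      then have "\<forall>i<m. 0 \<le> frob (A i) (outer y y) + 2 * (b i \<bullet> y) + c i"
        by (simp add: quad_def frob_outer)
      moreover have "psd (outer y y - outer y y)"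
        by (simp add: psd_def sym_mat_def transpose_def vec_eq_iff)
      ultimately show "y \<in> ?R" using sym_outer by (intro CollectI exI[of _ "outer y y"] conjI)
    qed
    show "convex ?R"
      unfolding convex_def
    proof (intro ballI allI impI)
      fix y1 y2 :: "real^'n" and u v :: real
      assume "y1 \<in> ?R" "y2 \<in> ?R" and uv: "0 \<le> u" "0 \<le> v" "u + v = 1"
      then obtain Y1 Y2 where Y1: "sym_mat Y1" "psd (Y1 - outer y1 y1)"
          "\<forall>i<m. 0 \<le> frob (A i) Y1 + 2 * (b i \<bullet> y1) + c i"
        and Y2: "sym_mat Y2" "psd (Y2 - outer y2 y2)"
          "\<forall>i<m. 0 \<le> frob (A i) Y2 + 2 * (b i \<bullet> y2) + c i" by blast
      define y where "y = u *\<^sub>R y1 + v *\<^sub>R y2"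
      define Y where "Y = u *\<^sub>R Y1 + v *\<^sub>R Y2"
      have sY: "sym_mat Y" unfolding Y_def using Y1(1) Y2(1) by (intro sym_add sym_scale)
      have "psd (Y - outer y y)"
        unfolding psd_outer_iff
      proof
        show "sym_mat (Y - outer y y)" using sY sym_outer by (rule sym_diff)
        show "\<forall>x. (y \<bullet> x)\<^sup>2 \<le> x \<bullet> (Y *v x)"
        proof
          fix x
          have "(y1 \<bullet> x)^2 \<le> x \<bullet> (Y1 *v x)" using Y1(2) by (simp add: psd_outer_iff)
          moreover have "(y2 \<bullet> x)^2 \<le> x \<bullet> (Y2 *v x)" using Y2(2) by (simp add: psd_outer_iff)
          ultimately have "(u * (y1 \<bullet> x) + v * (y2 \<bullet> x))^2 \<le> u * (x \<bullet> (Y1 *v x)) + v * (x \<bullet> (Y2 *v x))"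
            using uv by (intro convex_ineq)
          then show "(y \<bullet> x)\<^sup>2 \<le> x \<bullet> (Y *v x)"
            unfolding y_def Y_def by (simp add: qf_add qf_scale inner_add_left)
        qed
      qed
      moreover have "\<forall>i<m. 0 \<le> frob (A i) Y + 2 * (b i \<bullet> y) + c i"
      proof (intro allI impI)
        fix i assume "i < m"
        then have "0 \<le> u * (frob (A i) Y1 + 2 * (b i \<bullet> y1) + c i) + v * (frob (A i) Y2 + 2 * (b i \<bullet> y2) + c i)"
          using Y1(3) Y2(3) uv by simp
        also have "\<dots> = frob (A i) Y + 2 * (b i \<bullet> y) + c i"
          unfolding Y_def y_def using uv(3)
          by (simp add: frob_add frob_scale inner_add_right algebra_simps) (metis distrib_right mult_1)
        finally show "0 \<le> frob (A i) Y + 2 * (b i \<bullet> y) + c i" .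
      qed
      ultimately have "y \<in> ?R" using sY by (intro CollectI exI[of _ Y] conjI)
      then show "u *\<^sub>R y1 + v *\<^sub>R y2 \<in> ?R" unfolding y_def .
    qed
  qed
next
  show "?R \<subseteq> convex hull ?Q"
  proof
    fix y assume "y \<in> ?R"
    then obtain Y where Y: "sym_mat Y" "psd (Y - outer y y)"
        "\<forall>i<m. 0 \<le> frob (A i) Y + 2 * (b i \<bullet> y) + c i" by blast
    let ?S = "S_cone ((\<lambda>i. lift_mat (A i) (b i) (c i)) ` {..<m})"
    define X where "X = lift_mat Y y 1"
    have "psd X" unfolding psd_def
    proof
      show "sym_mat X" unfolding X_def using Y(1) by (rule sym_lift)
      show "\<forall>x. 0 \<le> x \<bullet> (X *v x)"
      proof
        fix x :: "real^(unit+'n)"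
    define s where "s = x $ Inl ()"
        define z where "z = ((\<chi> j. x $ Inr j) :: real^'n)"
        have "(y \<bullet> z)^2 \<le> z \<bullet> (Y *v z)" using Y(2) by (simp add: psd_outer_iff)
        moreover have "x \<bullet> (X *v x) = s^2 + 2 * s * (y \<bullet> z) + z \<bullet> (Y *v z)"
          unfolding X_def qf_lift s_def z_def by simp
        moreover have "0 \<le> (s + y \<bullet> z)^2" by simp
        ultimately show "0 \<le> x \<bullet> (X *v x)" by (simp add: power2_eq_square algebra_simps)
      qed
    qed
    moreover have "\<forall>M\<in>(\<lambda>i. lift_mat (A i) (b i) (c i)) ` {..<m}. 0 \<le> frob M X"
      using Y(3) by (auto simp: X_def frob_lift)
    ultimately have "X \<in> ?S" by (simp add: S_cone_def)
    then have "X \<in> convex hull (?S \<inter> range (\<lambda>x. outer x x))"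
      using rog unfolding ROG_def by simp
    then obtain T u where T: "finite T" "T \<subseteq> ?S \<inter> range (\<lambda>x. outer x x)"
      "\<forall>W\<in>T. 0 \<le> u W" "sum u T = 1" "(\<Sum>W\<in>T. u W *\<^sub>R W) = X"
    proof -
      from \<open>X \<in> convex hull (?S \<inter> range (\<lambda>x. outer x x))\<close>
      have "\<exists>T u. finite T \<and> T \<subseteq> ?S \<inter> range (\<lambda>x. outer x x) \<and> (\<forall>W\<in>T. 0 \<le> u W) \<and> sum u T = 1 \<and> (\<Sum>W\<in>T. u W *\<^sub>R W) = X"
        unfolding convex_hull_explicit mem_Collect_eq .
      then show ?thesis using that by (elim exE conjE) assumption
    qed
    define xv where "xv W = (SOME x. W = outer x x)" for W :: "real^(unit+'n)^(unit+'n)"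
    have W_eq: "W = outer (xv W) (xv W)" if "W \<in> T" for W
    proof -
      have "W \<in> range (\<lambda>x. outer x x)" using T(2) that by blast
      then have "\<exists>x. W = outer x x" by (simp add: image_iff)
      then show ?thesis unfolding xv_def by (rule someI_ex)
    qed
    have Wij: "W $ i $ j = xv W $ i * xv W $ j" if "W \<in> T" for W :: "real^(unit+'n)^(unit+'n)" and i j
    proof -
      have "W $ i $ j = outer (xv W) (xv W) $ i $ j"
        using W_eq[OF that] by (rule arg_cong[where f="\<lambda>M. M $ i $ j"])
      also have "\<dots> = xv W $ i * xv W $ j" by (simp add: outer_def)
      finally show ?thesis .
    qed
    have Xij: "X $ i $ j = (\<Sum>W\<in>T. u W * W $ i $ j)" for i j
    proof -
      have "X $ i $ j = (\<Sum>W\<in>T. u W *\<^sub>R W) $ i $ j" using T(5) by simp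
      also have "\<dots> = (\<Sum>W\<in>T. u W * W $ i $ j)" by simp
      finally show ?thesis .
    qed
    define s where "s W = xv W $ Inl ()" for W
    define z where "z W = ((\<chi> j. xv W $ Inr j) :: real^'n)" for W
    have one: "(\<Sum>W\<in>T. u W * (s W)^2) = 1"
    proof -
      have "X $ Inl () $ Inl () = 1" by (simp add: X_def lift_mat_def)
      then have "(\<Sum>W\<in>T. u W * W $ Inl () $ Inl ()) = 1" using Xij by simp
      moreover have "(\<Sum>W\<in>T. u W * W $ Inl () $ Inl ()) = (\<Sum>W\<in>T. u W * (s W)^2)"
        by (rule sum.cong) (simp_all add: Wij s_def power2_eq_square)
      ultimately show ?thesis by simp
    qed
    have yj: "y $ j = (\<Sum>W\<in>T. u W * s W * z W $ j)" for j
    proof -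
      have "X $ Inr j $ Inl () = y $ j" by (simp add: X_def lift_mat_def)
      then have "(\<Sum>W\<in>T. u W * W $ Inr j $ Inl ()) = y $ j" using Xij by simp
      moreover have "(\<Sum>W\<in>T. u W * W $ Inr j $ Inl ()) = (\<Sum>W\<in>T. u W * s W * z W $ j)"
        by (rule sum.cong) (simp_all add: Wij s_def z_def mult_ac)
      ultimately show ?thesis by simp
    qed
    define T' where "T' = {W\<in>T. s W \<noteq> 0}"
    have inQ: "(1 / s W) *\<^sub>R z W \<in> ?Q" if "W \<in> T'" for W
    proof -
      have W: "W \<in> T" "s W \<noteq> 0" using that by (auto simp: T'_def)
      show ?thesis
      proof (intro CollectI allI impI)
        fix i assume "i < m"
        then have "0 \<le> frob (lift_mat (A i) (b i) (c i)) W" using W T(2) by (auto simp: S_cone_def)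
        then have "0 \<le> xv W \<bullet> (lift_mat (A i) (b i) (c i) *v xv W)"
        proof -
          have "frob (lift_mat (A i) (b i) (c i)) W = frob (lift_mat (A i) (b i) (c i)) (outer (xv W) (xv W))"
            using W_eq[OF W(1)] by (rule arg_cong)
          then show ?thesis using \<open>0 \<le> frob (lift_mat (A i) (b i) (c i)) W\<close> by (simp add: frob_outer)
        qed
        then have h: "0 \<le> c i * (s W)^2 + 2 * s W * (b i \<bullet> z W) + z W \<bullet> (A i *v z W)"
          unfolding qf_lift s_def z_def .
        have "quad (A i) (b i) (c i) ((1 / s W) *\<^sub>R z W) =
              (c i * (s W)^2 + 2 * s W * (b i \<bullet> z W) + z W \<bullet> (A i *v z W)) / (s W)^2"
        proof -
          have "quad (A i) (b i) (c i) ((1 / s W) *\<^sub>R z W) =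
              (1 / s W) * (1 / s W) * (z W \<bullet> (A i *v z W)) + 2 * (1 / s W) * (b i \<bullet> z W) + c i"
            by (simp add: quad_def matrix_vector_mult_scaleR)
          also have "\<dots> = (c i * (s W)^2 + 2 * s W * (b i \<bullet> z W) + z W \<bullet> (A i *v z W)) / (s W)^2"
            using W(2) by (simp add: field_simps power2_eq_square)
          finally show ?thesis .
        qed
        then show "0 \<le> quad (A i) (b i) (c i) ((1 / s W) *\<^sub>R z W)" using h by simp
      qed
    qed
    have "(\<Sum>W\<in>T'. (u W * (s W)^2) *\<^sub>R ((1 / s W) *\<^sub>R z W)) \<in> convex hull ?Q"
    proof (rule convex_sum)
      show "finite T'" using T(1) by (simp add: T'_def)
      show "convex (convex hull ?Q)" by simp
      show "(\<Sum>W\<in>T'. u W * (s W)^2) = 1"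
      proof -
        have "(\<Sum>W\<in>T'. u W * (s W)^2) = (\<Sum>W\<in>T. u W * (s W)^2)"
          by (rule sum.mono_neutral_left) (auto simp: T'_def T(1))
        then show ?thesis using one by simp
      qed
      show "\<And>W. W \<in> T' \<Longrightarrow> 0 \<le> u W * (s W)^2" using T(3) by (simp add: T'_def)
      show "\<And>W. W \<in> T' \<Longrightarrow> (1 / s W) *\<^sub>R z W \<in> convex hull ?Q"
        by (rule hull_inc) (rule inQ)
    qed
    moreover have "(\<Sum>W\<in>T'. (u W * (s W)^2) *\<^sub>R ((1 / s W) *\<^sub>R z W)) = y"
      unfolding vec_eq_iff
    proof
      fix j
      have "(\<Sum>W\<in>T'. (u W * (s W)^2) *\<^sub>R ((1 / s W) *\<^sub>R z W)) $ j = (\<Sum>W\<in>T'. u W * s W * z W $ j)"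
        unfolding sum_component vector_scaleR_component
        by (rule sum.cong) (auto simp: T'_def power2_eq_square)
      also have "\<dots> = (\<Sum>W\<in>T. u W * s W * z W $ j)"
        using T(1) unfolding T'_def by (intro sum.mono_neutral_left) auto
      finally show "(\<Sum>W\<in>T'. (u W * (s W)^2) *\<^sub>R ((1 / s W) *\<^sub>R z W)) $ j = y $ j"
        using yj by simp
    qed
    ultimately show "y \<in> convex hull ?Q" by simp
  qed
qed

end
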